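(* Let $r\in N$ with $r^2=-2$, and let $R_r\subset N$ be the sublattice generated by $r$ and $\rho(r)$ (so $R_r\cong A_1\oplus A_1$). Then the orthogonal complement of $R_r$ in $N$ is isomorphic to $U\oplus U(2)\oplus D_4\oplus A_1^{\oplus2}$, and $(r+\rho(r))/2\in N^*$.
   Context: Lattices: $U$ has Gram matrix $\begin{pmatrix}0&1\\1&0\end{pmatrix}$; $A_1,D_4$ are negative definite root lattices; $U(2)$ is $U$ with form multiplied by $2$. $N=U\oplus U(2)\oplus D_4\oplus D_4$ and $N^*$ its dual. $\rho=\rho_1\oplus\rho_0\oplus\rho_0\in O(N)$, where, realizing $D_4=\{x\in\mathbb Z^4:x_1+\dots+x_4\equiv0\bmod2\}$ with the negative standard inner product, $\rho_0(x_1,x_2,x_3,x_4)=(x_2,-x_1,x_4,-x_3)$, and for standard hyperbolic bases $e,f$ of $U$ and $e',f'$ of $U(2)$, $\rho_1(e)=-e-e'$, $\rho_1(f)=f-f'$, $\rho_1(e')=e'+2e$, $\rho_1(f')=2f-f'$. $\rho$ has order $4$ and acts trivially on $N^*/N$. *)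

theory Defs
  imports Complex_Main
begin

text \<open>Lattice vectors are modelled as coordinate vectors  nat => 'a  that vanish
outside a finite index range.  For N = U + U(2) + D4 + D4 the coordinates are:
0,1 = coefficients of e,f (hyperbolic basis of U); 2,3 = coefficients of e',f'
(hyperbolic basis of U(2)); 4..7 = first D4 (inside Z^4); 8..11 = second D4.\<close>

definition supp_in :: "nat \<Rightarrow> (nat \<Rightarrow> 'a::zero) \<Rightarrow> bool" where
  "supp_in n x \<longleftrightarrow> (\<forall>i\<ge>n. x i = 0)"

definition bN :: "(nat \<Rightarrow> 'a::comm_ring_1) \<Rightarrow> (nat \<Rightarrow> 'a) \<Rightarrow> 'a" where
  "bN x y = x 0 * y 1 + x 1 * y 0 + 2 * (x 2 * y 3 + x 3 * y 2)
            - (\<Sum>i\<in>{4..<12}. x i * y i)"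

definition N_lat :: "(nat \<Rightarrow> int) set" where
  "N_lat = {x. supp_in 12 x \<and> even (x 4 + x 5 + x 6 + x 7) \<and> even (x 8 + x 9 + x 10 + x 11)}"

definition N_dual :: "(nat \<Rightarrow> rat) set" where
  "N_dual = {v. supp_in 12 v \<and> (\<forall>x\<in>N_lat. bN v (\<lambda>i. of_int (x i)) \<in> \<int>)}"

definition rho :: "(nat \<Rightarrow> int) \<Rightarrow> (nat \<Rightarrow> int)" where
  "rho x = (\<lambda>i.
     if i = 0 then - x 0 + 2 * x 2
     else if i = 1 then x 1 + 2 * x 3
     else if i = 2 then - x 0 + x 2
     else if i = 3 then - x 1 - x 3
     else if i = 4 then x 5
     else if i = 5 then - x 4
     else if i = 6 then x 7
     else if i = 7 then - x 6
     else if i = 8 then x 9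
     else if i = 9 then - x 8
     else if i = 10 then x 11
     else if i = 11 then - x 10
     else 0)"

definition R_lat :: "(nat \<Rightarrow> int) \<Rightarrow> (nat \<Rightarrow> int) set" where
  "R_lat r = {(\<lambda>i. m * r i + n * rho r i) | m n. True}"

definition orth_compl :: "(nat \<Rightarrow> int) set \<Rightarrow> (nat \<Rightarrow> int) set" where
  "orth_compl S = {x \<in> N_lat. \<forall>y\<in>S. bN x y = 0}"

text \<open>Model of A1 + A1 (A1 negative definite, Gram (-2)) in Z^2.\<close>
definition A1A1_lat :: "(nat \<Rightarrow> int) set" where
  "A1A1_lat = {x. supp_in 2 x}"

definition bA1A1 :: "(nat \<Rightarrow> int) \<Rightarrow> (nat \<Rightarrow> int) \<Rightarrow> int" where
  "bA1A1 x y = - 2 * x 0 * y 0 - 2 * x 1 * y 1"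

text \<open>Model of U + U(2) + D4 + A1 + A1 in Z^10: coordinates 0,1 (U), 2,3 (U(2)),
4..7 (D4 in Z^4), 8 and 9 (the two A1's).\<close>
definition M_lat :: "(nat \<Rightarrow> int) set" where
  "M_lat = {x. supp_in 10 x \<and> even (x 4 + x 5 + x 6 + x 7)}"

definition bM :: "(nat \<Rightarrow> int) \<Rightarrow> (nat \<Rightarrow> int) \<Rightarrow> int" where
  "bM x y = x 0 * y 1 + x 1 * y 0 + 2 * (x 2 * y 3 + x 3 * y 2)
            - (\<Sum>i\<in>{4..<8}. x i * y i) - 2 * x 8 * y 8 - 2 * x 9 * y 9"

definition lattice_iso ::
  "(nat \<Rightarrow> int) set \<Rightarrow> ((nat \<Rightarrow> int) \<Rightarrow> (nat \<Rightarrow> int) \<Rightarrow> int) \<Rightarrow>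
   (nat \<Rightarrow> int) set \<Rightarrow> ((nat \<Rightarrow> int) \<Rightarrow> (nat \<Rightarrow> int) \<Rightarrow> int) \<Rightarrow> bool" where
  "lattice_iso L1 B1 L2 B2 \<longleftrightarrow>
     (\<exists>f. bij_betw f L1 L2 \<and>
          (\<forall>x\<in>L1. \<forall>y\<in>L1. f (\<lambda>i. x i + y i) = (\<lambda>i. f x i + f y i) \<and> B2 (f x) (f y) = B1 x y))"

end

theory Submission
  imports Defs
begin

lemma sum412: "(\<Sum>j\<in>{4::nat..<12}. f j) = f 4 + f 5 + f 6 + f 7 + f 8 + f 9 + f 10 + (f 11 :: 'a::comm_monoid_add)"
  by (simp add: numeral_eq_Suc atLeastLessThanSuc add_ac)

lemma bN_exp: "bN x y = x 0 * y 1 + x 1 * y 0 + 2 * (x 2 * y 3 + x 3 * y 2)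
   - (x 4 * y 4 + x 5 * y 5 + x 6 * y 6 + x 7 * y 7 + x 8 * y 8 + x 9 * y 9 + x 10 * y 10 + x 11 * y 11)"
  by (simp add: bN_def sum412 algebra_simps)

lemma cases12:
  assumes "\<And>i. i \<ge> 12 \<Longrightarrow> P i" "P 0" "P 1" "P 2" "P 3" "P 4" "P 5" "P 6" "P 7" "P 8" "P 9" "P 10" "P 11"
  shows "P (i::nat)"
proof -
  have "i \<ge> 12 \<or> i = 0 \<or> i = 1 \<or> i = 2 \<or> i = 3 \<or> i = 4 \<or> i = 5 \<or> i = 6 \<or> i = 7 \<or> i = 8 \<or> i = 9 \<or> i = 10 \<or> i = 11" by presburger
  then show ?thesis using assms by auto
qed

lemma N_latI: "(\<And>i. i \<ge> 12 \<Longrightarrow> x i = 0) \<Longrightarrow> even (x 4 + x 5 + x 6 + x 7) \<Longrightarrow> even (x 8 + x 9 + x 10 + x 11) \<Longrightarrow> x \<in> N_lat"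
  by (simp add: N_lat_def supp_in_def)

lemma N_latD: assumes "x \<in> N_lat"
  shows "\<And>i. i \<ge> 12 \<Longrightarrow> x i = 0" "even (x 4 + x 5 + x 6 + x 7)" "even (x 8 + x 9 + x 10 + x 11)"
  using assms by (auto simp: N_lat_def supp_in_def)

definition vadd :: "(nat \<Rightarrow> int) \<Rightarrow> (nat \<Rightarrow> int) \<Rightarrow> (nat \<Rightarrow> int)" where
  "vadd x y = (\<lambda>i. x i + y i)"

lemma even_sum4: "even (a1 + a2 + a3 + a4) \<Longrightarrow> even (b1 + b2 + b3 + b4) \<Longrightarrow>
   even ((a1 + b1) + (a2 + b2) + (a3 + b3) + ((a4::int) + b4))"
proof -
  assume "even (a1 + a2 + a3 + a4)" "even (b1 + b2 + b3 + b4)"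
  then have "even ((a1 + a2 + a3 + a4) + (b1 + b2 + b3 + b4))" by simp
  then show ?thesis by (simp add: algebra_simps)
qed

lemma vadd_N: assumes "x \<in> N_lat" "y \<in> N_lat" shows "vadd x y \<in> N_lat"
  using N_latD[OF assms(1)] N_latD[OF assms(2)]
  by (intro N_latI) (auto simp: vadd_def intro: even_sum4)

lemma rho_N: assumes "x \<in> N_lat" shows "rho x \<in> N_lat"
proof (rule N_latI)
  show "\<And>i. 12 \<le> i \<Longrightarrow> rho x i = 0" by (simp add: rho_def)
  have "even (x 4 + x 5 + x 6 + x 7)" using N_latD[OF assms] by simp
  then have "even (x 5 - x 4 + x 7 - x 6)" by presburger
  moreover have "rho x 4 + rho x 5 + rho x 6 + rho x 7 = x 5 - x 4 + x 7 - x 6" by (simp add: rho_def)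
  ultimately show "even (rho x 4 + rho x 5 + rho x 6 + rho x 7)" by simp
  have "even (x 8 + x 9 + x 10 + x 11)" using N_latD[OF assms] by simp
  then have "even (x 9 - x 8 + x 11 - x 10)" by presburger
  moreover have "rho x 8 + rho x 9 + rho x 10 + rho x 11 = x 9 - x 8 + x 11 - x 10" by (simp add: rho_def)
  ultimately show "even (rho x 8 + rho x 9 + rho x 10 + rho x 11)" by simp
qed

lemma rho_rho: "rho (rho x) i = (if i < 12 then - x i else 0)"
  by (rule cases12[of _ i]) (simp_all add: rho_def)

lemma bN_rho: "bN (rho x) (rho y) = bN x y"
  by (simp add: bN_exp rho_def algebra_simps)

lemma bN_rho_anti: "bN x (rho y) = - bN (rho x) y"
  by (simp add: bN_exp rho_def algebra_simps)

lemma bN_rho_self: "bN x (rho x) = 0"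
  by (simp add: bN_exp rho_def algebra_simps)

lemma bN_sym: "bN x y = bN y x"
  by (simp add: bN_exp algebra_simps)

lemma rho_vadd: "rho (vadd x y) = vadd (rho x) (rho y)"
  by (rule ext, rule cases12) (simp_all add: rho_def vadd_def)

lemma bN_vadd_left: "bN (vadd x y) z = bN x z + bN y z"
  by (simp add: bN_exp vadd_def algebra_simps)

lemma bN_vadd_right: "bN z (vadd x y) = bN z x + bN z y"
  by (simp add: bN_exp vadd_def algebra_simps)

definition good :: "((nat \<Rightarrow> int) \<Rightarrow> (nat \<Rightarrow> int)) \<Rightarrow> bool" where
  "good g \<longleftrightarrow> bij_betw g N_lat N_lat
     \<and> (\<forall>x\<in>N_lat. \<forall>y\<in>N_lat. g (vadd x y) = vadd (g x) (g y))
     \<and> (\<forall>x\<in>N_lat. \<forall>y\<in>N_lat. bN (g x) (g y) = bN x y)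
     \<and> (\<forall>x\<in>N_lat. g (rho x) = rho (g x))"

lemma goodI:
  assumes "\<And>x. x \<in> N_lat \<Longrightarrow> g x \<in> N_lat"
    and "\<And>x. x \<in> N_lat \<Longrightarrow> h x \<in> N_lat"
    and "\<And>x. x \<in> N_lat \<Longrightarrow> h (g x) = x"
    and "\<And>x. x \<in> N_lat \<Longrightarrow> g (h x) = x"
    and "\<And>x y. x \<in> N_lat \<Longrightarrow> y \<in> N_lat \<Longrightarrow> g (vadd x y) = vadd (g x) (g y)"
    and "\<And>x y. x \<in> N_lat \<Longrightarrow> y \<in> N_lat \<Longrightarrow> bN (g x) (g y) = bN x y"
    and "\<And>x. x \<in> N_lat \<Longrightarrow> g (rho x) = rho (g x)"
  shows "good g"
  unfolding good_def
  using assms by (auto intro!: bij_betw_byWitness[where f'=h])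

lemma good_N: "good g \<Longrightarrow> x \<in> N_lat \<Longrightarrow> g x \<in> N_lat"
  unfolding good_def bij_betw_def by auto

lemma good_bN: "good g \<Longrightarrow> x \<in> N_lat \<Longrightarrow> y \<in> N_lat \<Longrightarrow> bN (g x) (g y) = bN x y"
  unfolding good_def by auto

lemma good_rho: "good g \<Longrightarrow> x \<in> N_lat \<Longrightarrow> g (rho x) = rho (g x)"
  unfolding good_def by auto

lemma good_add: "good g \<Longrightarrow> x \<in> N_lat \<Longrightarrow> y \<in> N_lat \<Longrightarrow> g (vadd x y) = vadd (g x) (g y)"
  unfolding good_def by auto

lemma good_bij: "good g \<Longrightarrow> bij_betw g N_lat N_lat"
  unfolding good_def by auto

lemma good_comp: assumes "good f" "good g" shows "good (f \<circ> g)"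
  unfolding good_def
proof (intro conjI ballI)
  show "bij_betw (f \<circ> g) N_lat N_lat" using good_bij[OF assms(1)] good_bij[OF assms(2)] bij_betw_trans by blast
  fix x y assume x: "x \<in> N_lat" and y: "y \<in> N_lat"
  show "(f \<circ> g) (vadd x y) = vadd ((f \<circ> g) x) ((f \<circ> g) y)"
    using x y by (simp add: good_add[OF assms(2)] good_add[OF assms(1)] good_N[OF assms(2)])
  show "bN ((f \<circ> g) x) ((f \<circ> g) y) = bN x y"
    using x y by (simp add: good_bN[OF assms(2)] good_bN[OF assms(1)] good_N[OF assms(2)])
next
  fix x assume x: "x \<in> N_lat"
  show "(f \<circ> g) (rho x) = rho ((f \<circ> g) x)"
    using x by (simp add: good_rho[OF assms(2)] good_rho[OF assms(1)] good_N[OF assms(2)])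
qed

lemma good_inv: assumes "good g" shows "good (inv_into N_lat g)"
proof -
  let ?h = "inv_into N_lat g"
  have bij: "bij_betw g N_lat N_lat" using good_bij[OF assms] .
  have hN: "?h x \<in> N_lat" if "x \<in> N_lat" for x
    using bij that by (metis bij_betw_def inv_into_into)
  have gh: "g (?h x) = x" if "x \<in> N_lat" for x
    using bij_betw_inv_into_right[OF bij that] .
  have hg: "?h (g x) = x" if "x \<in> N_lat" for x
    using bij_betw_inv_into_left[OF bij that] .
  show ?thesis
  proof (rule goodI[where h = g])
    fix x y assume x: "x \<in> N_lat" and y: "y \<in> N_lat"
    show "?h x \<in> N_lat" using hN x .
    show "g x \<in> N_lat" using good_N[OF assms x] .
    show "g (?h x) = x" using gh x .
    show "?h (g x) = x" using hg x .
    have "g (vadd (?h x) (?h y)) = vadd x y"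
      using good_add[OF assms hN[OF x] hN[OF y]] gh x y by simp
    then show "?h (vadd x y) = vadd (?h x) (?h y)"
      using hg[OF vadd_N[OF hN[OF x] hN[OF y]]] by simp
    show "bN (?h x) (?h y) = bN x y"
      using good_bN[OF assms hN[OF x] hN[OF y]] gh x y by simp
  next
    fix x assume x: "x \<in> N_lat"
    have "g (rho (?h x)) = rho x" using good_rho[OF assms hN[OF x]] gh[OF x] by simp
    then show "?h (rho x) = rho (?h x)"
      using hg[OF rho_N[OF hN[OF x]]] by simp
  qed
qed

lemma good_id: "good id"
  by (rule goodI[where h=id]) auto

lemma rho_good: "good rho"
proof (rule goodI[where h = "\<lambda>x. rho (rho (rho x))"])
  fix x y assume x: "x \<in> N_lat" and y: "y \<in> N_lat"
  show "rho x \<in> N_lat" using rho_N x .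
  show "rho (rho (rho x)) \<in> N_lat" using rho_N x by blast
  have rr: "rho (rho (rho (rho x))) = x"
  proof (rule ext)
    fix i show "rho (rho (rho (rho x))) i = x i"
      using N_latD(1)[OF x, of i] by (simp add: rho_rho)
  qed
  show "rho (rho (rho (rho x))) = x" using rr .
  show "rho (rho (rho (rho x))) = x" using rr .
  show "rho (vadd x y) = vadd (rho x) (rho y)" by (rule rho_vadd)
  show "bN (rho x) (rho y) = bN x y" by (rule bN_rho)
qed simp

definition ofv :: "(nat \<Rightarrow> int) \<Rightarrow> (nat \<Rightarrow> rat)" where
  "ofv x = (\<lambda>i. of_int (x i))"

definition rhoQ :: "(nat \<Rightarrow> rat) \<Rightarrow> (nat \<Rightarrow> rat)" where
  "rhoQ x = (\<lambda>i.
     if i = 0 then - x 0 + 2 * x 2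
     else if i = 1 then x 1 + 2 * x 3
     else if i = 2 then - x 0 + x 2
     else if i = 3 then - x 1 - x 3
     else if i = 4 then x 5
     else if i = 5 then - x 4
     else if i = 6 then x 7
     else if i = 7 then - x 6
     else if i = 8 then x 9
     else if i = 9 then - x 8
     else if i = 10 then x 11
     else if i = 11 then - x 10
     else 0)"

lemma ofv_rho: "ofv (rho x) = rhoQ (ofv x)"
  by (rule ext, rule cases12) (simp_all add: ofv_def rho_def rhoQ_def)

lemma ofv_inj: "ofv x = ofv y \<Longrightarrow> x = y"
  by (rule ext) (metis ofv_def of_int_eq_iff)

lemma bN_ofv: "bN (ofv x) (ofv y) = of_int (bN x y)"
  by (simp add: bN_exp ofv_def)

definition EQ :: "(nat \<Rightarrow> rat) \<Rightarrow> (nat \<Rightarrow> rat) \<Rightarrow> (nat \<Rightarrow> rat)" where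
  "EQ w X = (let rw = rhoQ w;
     k1 = - (\<Sum>j\<in>{4..<12}. X j * w j) / 2;
     k2 = - (\<Sum>j\<in>{4..<12}. X j * rw j) / 2;
     c = (\<Sum>j\<in>{4..<12}. w j ^ 2) / 4 in
     (\<lambda>i. if i = 0 then X 0 - k1 + k2 + c * (X 1 + 2 * X 3)
          else if i = 2 then X 2 + k2 + c * X 3
          else if 4 \<le> i \<and> i < 12 then X i + X 1 * (w i - rw i) / 2 - X 3 * rw i
          else X i))"

definition TQ :: "rat \<Rightarrow> (nat \<Rightarrow> rat) \<Rightarrow> (nat \<Rightarrow> rat)" where
  "TQ t X = (\<lambda>i. if i = 0 then X 0 + 2 * t * X 3 else if i = 2 then X 2 - t * X 1 else X i)"

lemma EQ_iso: "bN (EQ w X) (EQ w Y) = bN X Y"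
  unfolding bN_exp EQ_def Let_def sum412
  by (simp add: rhoQ_def field_simps) algebra

lemma EQ_rho: "EQ w (rhoQ X) = rhoQ (EQ w X)"
  apply (rule ext, rule cases12)
  apply (simp_all add: EQ_def Let_def sum412 rhoQ_def field_simps)
  apply (simp_all add: algebra_simps)?
  done

lemma EQ_add: "EQ w (\<lambda>i. X i + Y i) = (\<lambda>i. EQ w X i + EQ w Y i)"
  apply (rule ext, rule cases12)
  apply (simp_all add: EQ_def Let_def sum412 rhoQ_def field_simps)
  apply (simp_all add: algebra_simps)?
  done

lemma EQ_inv1: "EQ w (EQ (\<lambda>i. - w i) (TQ (- ((\<Sum>j\<in>{4..<12}. w j ^ 2) / 4)) X)) = X"
  apply (rule ext, rule cases12)
  apply (simp_all add: EQ_def TQ_def Let_def sum412 rhoQ_def power2_eq_square field_simps)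
  apply (simp_all add: algebra_simps)?
  done

lemma EQ_inv2: "EQ (\<lambda>i. - w i) (TQ (- ((\<Sum>j\<in>{4..<12}. w j ^ 2) / 4)) (EQ w X)) = X"
  apply (rule ext, rule cases12)
  apply (simp_all add: EQ_def TQ_def Let_def sum412 rhoQ_def power2_eq_square field_simps)
  apply (simp_all add: algebra_simps)?
  done

definition okW :: "(nat \<Rightarrow> int) \<Rightarrow> bool" where
  "okW W \<longleftrightarrow> (\<forall>i. (i < 4 \<or> 12 \<le> i) \<longrightarrow> W i = 0) \<and>
     even (W 5 - W 4) \<and> even (W 6 - W 4) \<and> even (W 7 - W 4) \<and>
     even (W 9 - W 8) \<and> even (W 10 - W 8) \<and> even (W 11 - W 8)"

definition E :: "(nat \<Rightarrow> int) \<Rightarrow> (nat \<Rightarrow> int) \<Rightarrow> (nat \<Rightarrow> int)" where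
  "E W x = (let rW = rho W;
     k1 = (- (\<Sum>j\<in>{4..<12}. x j * W j)) div 2;
     k2 = (- (\<Sum>j\<in>{4..<12}. x j * rW j)) div 2;
     c = (\<Sum>j\<in>{4..<12}. W j ^ 2) div 4 in
     (\<lambda>i. if i = 0 then x 0 - k1 + k2 + c * (x 1 + 2 * x 3)
          else if i = 2 then x 2 + k2 + c * x 3
          else if 4 \<le> i \<and> i < 12 then x i + x 1 * ((W i - rW i) div 2) - x 3 * rW i
          else x i))"

definition T :: "int \<Rightarrow> (nat \<Rightarrow> int) \<Rightarrow> (nat \<Rightarrow> int)" where
  "T t x = (\<lambda>i. if i = 0 then x 0 + 2 * t * x 3 else if i = 2 then x 2 - t * x 1 else x i)"

definition sig :: "(nat \<Rightarrow> int) \<Rightarrow> (nat \<Rightarrow> int)" where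
  "sig x = (\<lambda>i. if i = 0 then x 1 else if i = 1 then x 0 - 2 * x 2 else if i = 2 then x 1 + x 3
              else if i = 3 then x 2 else x i)"

definition sigi :: "(nat \<Rightarrow> int) \<Rightarrow> (nat \<Rightarrow> int)" where
  "sigi x = (\<lambda>i. if i = 0 then x 1 + 2 * x 3 else if i = 1 then x 0 else if i = 2 then x 3
              else if i = 3 then x 2 - x 0 else x i)"

lemma blk_dot:
  fixes x4 x5 x6 x7 w4 w5 w6 w7 :: int
  assumes "even (x4+x5+x6+x7)" "even (w5 - w4)" "even (w6 - w4)" "even (w7 - w4)"
  shows "even (x4*w4 + x5*w5 + x6*w6 + x7*w7)"
proof -
  from assms(1) obtain s where s: "x4+x5+x6+x7 = 2*s" by (rule evenE)
  from assms(2) obtain a5 where a5: "w5 - w4 = 2*a5" by (rule evenE)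
  from assms(3) obtain a6 where a6: "w6 - w4 = 2*a6" by (rule evenE)
  from assms(4) obtain a7 where a7: "w7 - w4 = 2*a7" by (rule evenE)
  have "x4*w4 + x5*w5 + x6*w6 + x7*w7 = w4*(x4+x5+x6+x7) + x5*(w5-w4) + x6*(w6-w4) + x7*(w7-w4)"
    by (simp add: algebra_simps)
  also have "\<dots> = 2 * (w4*s + x5*a5 + x6*a6 + x7*a7)" unfolding s a5 a6 a7 by (simp add: algebra_simps)
  finally show ?thesis by simp
qed

lemma blk_sq:
  fixes w4 w5 w6 w7 :: int
  assumes "even (w5 - w4)" "even (w6 - w4)" "even (w7 - w4)"
  shows "4 dvd (w4^2 + w5^2 + w6^2 + w7^2)"
proof -
  from assms(1) obtain a5 where "w5 - w4 = 2*a5" by (rule evenE)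
  then have a5: "w5 = w4 + 2*a5" by simp
  from assms(2) obtain a6 where "w6 - w4 = 2*a6" by (rule evenE)
  then have a6: "w6 = w4 + 2*a6" by simp
  from assms(3) obtain a7 where "w7 - w4 = 2*a7" by (rule evenE)
  then have a7: "w7 = w4 + 2*a7" by simp
  have eq: "w4^2 + w5^2 + w6^2 + w7^2 = 4 * (w4^2 + w4*(a5+a6+a7) + a5^2 + a6^2 + a7^2)"
    unfolding a5 a6 a7 by (simp add: power2_eq_square algebra_simps)
  show ?thesis unfolding eq by (rule dvd_triv_left)
qed

lemma okW_D: assumes "okW W"
  shows "\<And>i. i < 4 \<Longrightarrow> W i = 0" "\<And>i. 12 \<le> i \<Longrightarrow> W i = 0"
    "even (W 5 - W 4)" "even (W 6 - W 4)" "even (W 7 - W 4)"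
    "even (W 9 - W 8)" "even (W 10 - W 8)" "even (W 11 - W 8)"
  using assms by (auto simp: okW_def)

lemma ev1: assumes "x \<in> N_lat" "okW W" shows "even (\<Sum>j\<in>{4..<12}. x j * W j)"
proof -
  have a: "even (x 4 * W 4 + x 5 * W 5 + x 6 * W 6 + x 7 * W 7)"
    by (rule blk_dot) (use N_latD[OF assms(1)] okW_D[OF assms(2)] in auto)
  have b: "even (x 8 * W 8 + x 9 * W 9 + x 10 * W 10 + x 11 * W 11)"
    by (rule blk_dot) (use N_latD[OF assms(1)] okW_D[OF assms(2)] in auto)
  have "(\<Sum>j\<in>{4..<12}. x j * W j) = (x 4 * W 4 + x 5 * W 5 + x 6 * W 6 + x 7 * W 7) + (x 8 * W 8 + x 9 * W 9 + x 10 * W 10 + x 11 * W 11)"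
    by (simp add: sum412 add_ac)
  then show ?thesis using a b by simp
qed

lemma ev2: assumes "x \<in> N_lat" "okW W" shows "even (\<Sum>j\<in>{4..<12}. x j * rho W j)"
proof -
  note o = okW_D[OF assms(2)]
  have a: "even (x 4 * W 5 + x 5 * (- W 4) + x 6 * W 7 + x 7 * (- W 6))"
    by (rule blk_dot) (use N_latD(2)[OF assms(1)] o(3-5) in presburger)+
  have b: "even (x 8 * W 9 + x 9 * (- W 8) + x 10 * W 11 + x 11 * (- W 10))"
    by (rule blk_dot) (use N_latD(3)[OF assms(1)] o(6-8) in presburger)+
  have "(\<Sum>j\<in>{4..<12}. x j * rho W j) = (x 4 * W 5 + x 5 * (- W 4) + x 6 * W 7 + x 7 * (- W 6)) + (x 8 * W 9 + x 9 * (- W 8) + x 10 * W 11 + x 11 * (- W 10))"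
    by (simp add: sum412 rho_def add_ac)
  then show ?thesis using a b by simp
qed

lemma ev3: assumes "okW W" shows "4 dvd (\<Sum>j\<in>{4..<12}. W j ^ 2)"
proof -
  note o = okW_D[OF assms]
  have a: "4 dvd (W 4 ^ 2 + W 5 ^ 2 + W 6 ^ 2 + W 7 ^ 2)" by (rule blk_sq) (use o in auto)
  have b: "4 dvd (W 8 ^ 2 + W 9 ^ 2 + W 10 ^ 2 + W 11 ^ 2)" by (rule blk_sq) (use o in auto)
  have "(\<Sum>j\<in>{4..<12}. W j ^ 2) = (W 4 ^ 2 + W 5 ^ 2 + W 6 ^ 2 + W 7 ^ 2) + (W 8 ^ 2 + W 9 ^ 2 + W 10 ^ 2 + W 11 ^ 2)"
    by (simp add: sum412 add_ac)
  then show ?thesis using a b by simp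
qed

lemma ev4: assumes "okW W" "4 \<le> i" "i < 12" shows "even (W i - rho W i)"
proof -
  note o = okW_D[OF assms(1)]
  have "i = 4 \<or> i = 5 \<or> i = 6 \<or> i = 7 \<or> i = 8 \<or> i = 9 \<or> i = 10 \<or> i = 11" using assms by presburger
  then show ?thesis using o by (auto simp: rho_def)
qed

lemma div2_rat: "even (a::int) \<Longrightarrow> (of_int (a div 2) :: rat) = of_int a / 2"
  by (auto elim!: evenE)

lemma div4_rat: "4 dvd (a::int) \<Longrightarrow> (of_int (a div 4) :: rat) = of_int a / 4"
  by auto

lemma rhoQ_ofv_apply: "rhoQ (ofv W) j = of_int (rho W j)"
  by (metis ofv_rho ofv_def)

lemma rhoQ_ofv_apply2: "rhoQ (\<lambda>i. of_int (W i)) j = of_int (rho W j)"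
  using rhoQ_ofv_apply[of W j] by (simp add: ofv_def)

lemma E_lift: assumes "x \<in> N_lat" "okW W" shows "ofv (E W x) = EQ (ofv W) (ofv x)"
proof (rule ext)
  fix i
  have k1: "(of_int ((- (\<Sum>j\<in>{4..<12}. x j * W j)) div 2) :: rat) = - (\<Sum>j\<in>{4..<12}. ofv x j * ofv W j) / 2"
    using div2_rat[of "- (\<Sum>j\<in>{4..<12}. x j * W j)"] ev1[OF assms] by (simp add: ofv_def)
  have k2: "(of_int ((- (\<Sum>j\<in>{4..<12}. x j * rho W j)) div 2) :: rat) = - (\<Sum>j\<in>{4..<12}. ofv x j * rhoQ (ofv W) j) / 2"
    using div2_rat[of "- (\<Sum>j\<in>{4..<12}. x j * rho W j)"] ev2[OF assms] by (simp add: ofv_def rhoQ_ofv_apply2)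
  have c: "(of_int ((\<Sum>j\<in>{4..<12}. W j ^ 2) div 4) :: rat) = (\<Sum>j\<in>{4..<12}. ofv W j ^ 2) / 4"
    using div4_rat[OF ev3[OF assms(2)]] by (simp add: ofv_def)
  have d: "(of_int ((W i - rho W i) div 2) :: rat) = (ofv W i - rhoQ (ofv W) i) / 2" if "4 \<le> i" "i < 12"
    using div2_rat[OF ev4[OF assms(2) that]] by (simp add: ofv_def rhoQ_ofv_apply2)
  have r: "rhoQ (ofv W) i = of_int (rho W i)" by (rule rhoQ_ofv_apply)
  show "ofv (E W x) i = EQ (ofv W) (ofv x) i"
    unfolding E_def EQ_def Let_def
    using k1 k2 c d r by (simp add: ofv_def)
qed

lemma ofv_T: "ofv (T t x) = TQ (of_int t) (ofv x)"
  by (rule ext) (simp add: ofv_def T_def TQ_def)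

lemma T_N: "x \<in> N_lat \<Longrightarrow> T t x \<in> N_lat"
  using N_latD[of x] by (intro N_latI) (auto simp: T_def)

lemma T_good: "good (T t)"
proof (rule goodI[where h = "T (- t)"])
  fix x y assume x: "x \<in> N_lat" and y: "y \<in> N_lat"
  show "T t x \<in> N_lat" "T (- t) x \<in> N_lat" using T_N x by auto
  show "T (- t) (T t x) = x" "T t (T (- t) x) = x" by (rule ext, simp add: T_def algebra_simps)+
  show "T t (vadd x y) = vadd (T t x) (T t y)" by (rule ext, simp add: T_def vadd_def algebra_simps)
  show "bN (T t x) (T t y) = bN x y" by (simp add: T_def bN_exp algebra_simps)
next
  fix x assume "x \<in> N_lat"
  show "T t (rho x) = rho (T t x)"
    by (rule ext, rule cases12) (simp_all add: T_def rho_def algebra_simps)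
qed

lemma sig_N: "x \<in> N_lat \<Longrightarrow> sig x \<in> N_lat"
  using N_latD[of x] by (intro N_latI) (auto simp: sig_def)

lemma sigi_N: "x \<in> N_lat \<Longrightarrow> sigi x \<in> N_lat"
  using N_latD[of x] by (intro N_latI) (auto simp: sigi_def)

lemma sig_good: "good sig"
proof (rule goodI[where h = sigi])
  fix x y assume x: "x \<in> N_lat" and y: "y \<in> N_lat"
  show "sig x \<in> N_lat" "sigi x \<in> N_lat" using sig_N sigi_N x by auto
  show "sigi (sig x) = x" by (rule ext, rule cases12) (simp_all add: sig_def sigi_def)
  show "sig (sigi x) = x" by (rule ext, rule cases12) (simp_all add: sig_def sigi_def)
  show "sig (vadd x y) = vadd (sig x) (sig y)" by (rule ext, simp add: sig_def vadd_def algebra_simps)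
  show "bN (sig x) (sig y) = bN x y" by (simp add: sig_def bN_exp algebra_simps)
next
  fix x assume "x \<in> N_lat"
  show "sig (rho x) = rho (sig x)"
    by (rule ext, rule cases12) (simp_all add: sig_def rho_def algebra_simps)
qed

definition negv :: "(nat \<Rightarrow> int) \<Rightarrow> (nat \<Rightarrow> int)" where "negv W = (\<lambda>i. - W i)"

lemma okW_neg: assumes "okW W" shows "okW (negv W)"
proof -
  note o = okW_D[OF assms]
  have a: "\<forall>i. (i < 4 \<or> 12 \<le> i) \<longrightarrow> - W i = 0" using o(1,2) by auto
  have b: "even (- W 5 - - W 4)" "even (- W 6 - - W 4)" "even (- W 7 - - W 4)"
    "even (- W 9 - - W 8)" "even (- W 10 - - W 8)" "even (- W 11 - - W 8)"
    using o(3-8) by presburger+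
  show ?thesis unfolding okW_def negv_def using a b by blast
qed

lemma ofv_neg: "ofv (negv W) = (\<lambda>i. - ofv W i)"
  by (simp add: ofv_def negv_def)

lemma E_N: assumes x: "x \<in> N_lat" and W: "okW W" shows "E W x \<in> N_lat"
proof (rule N_latI)
  note L = fun_cong[OF E_lift[OF x W]]
  note o = okW_D[OF W]
  show "E W x i = 0" if "12 \<le> i" for i using that N_latD(1)[OF x that] by (simp add: E_def Let_def)
  have "(of_int (E W x 4 + E W x 5 + E W x 6 + E W x 7) :: rat) =
     of_int ((x 4 + x 5 + x 6 + x 7) + x 1 * (W 4 + W 6) - x 3 * (W 5 - W 4 + W 7 - W 6))"
    using L[of 4] L[of 5] L[of 6] L[of 7]
    by (simp add: ofv_def EQ_def Let_def rhoQ_def field_simps)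
  then have "E W x 4 + E W x 5 + E W x 6 + E W x 7 = (x 4 + x 5 + x 6 + x 7) + x 1 * (W 4 + W 6) - x 3 * (W 5 - W 4 + W 7 - W 6)"
    by (simp only: of_int_eq_iff)
  moreover have "even (W 4 + W 6)" "even (W 5 - W 4 + W 7 - W 6)" using o(3-5) by presburger+
  ultimately show "even (E W x 4 + E W x 5 + E W x 6 + E W x 7)" using N_latD(2)[OF x] by simp
  have "(of_int (E W x 8 + E W x 9 + E W x 10 + E W x 11) :: rat) =
     of_int ((x 8 + x 9 + x 10 + x 11) + x 1 * (W 8 + W 10) - x 3 * (W 9 - W 8 + W 11 - W 10))"
    using L[of 8] L[of 9] L[of 10] L[of 11]
    by (simp add: ofv_def EQ_def Let_def rhoQ_def field_simps)
  then have "E W x 8 + E W x 9 + E W x 10 + E W x 11 = (x 8 + x 9 + x 10 + x 11) + x 1 * (W 8 + W 10) - x 3 * (W 9 - W 8 + W 11 - W 10)"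
    by (simp only: of_int_eq_iff)
  moreover have "even (W 8 + W 10)" "even (W 9 - W 8 + W 11 - W 10)" using o(6-8) by presburger+
  ultimately show "even (E W x 8 + E W x 9 + E W x 10 + E W x 11)" using N_latD(3)[OF x] by simp
qed

lemma ofv_vadd: "ofv (vadd x y) = (\<lambda>i. ofv x i + ofv y i)"
  by (simp add: ofv_def vadd_def)

lemma E_good: assumes W: "okW W" shows "good (E W)"
proof -
  define c where "c = (\<Sum>j\<in>{4..<12}. W j ^ 2) div 4"
  have cq: "(of_int c :: rat) = (\<Sum>j\<in>{4..<12}. ofv W j ^ 2) / 4"
    using div4_rat[OF ev3[OF W]] by (simp add: c_def ofv_def)
  have Wn: "okW (negv W)" using okW_neg[OF W] .
  show ?thesis
  proof (rule goodI[where h = "\<lambda>x. E (negv W) (T (- c) x)"])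
    fix x y assume x: "x \<in> N_lat" and y: "y \<in> N_lat"
    show "E W x \<in> N_lat" using E_N[OF x W] .
    show "E (negv W) (T (- c) x) \<in> N_lat" using E_N[OF T_N[OF x] Wn] .
    show "E (negv W) (T (- c) (E W x)) = x"
      apply (rule ofv_inj)
      apply (simp add: E_lift[OF T_N[OF E_N[OF x W]] Wn] ofv_T E_lift[OF x W] ofv_neg cq)
      using EQ_inv2[of "ofv W"] by simp
    show "E W (E (negv W) (T (- c) x)) = x"
      apply (rule ofv_inj)
      apply (simp add: E_lift[OF E_N[OF T_N[OF x] Wn] W] E_lift[OF T_N[OF x] Wn] ofv_T ofv_neg cq)
      using EQ_inv1[of "ofv W"] by simp
    show "E W (vadd x y) = vadd (E W x) (E W y)"
      apply (rule ofv_inj)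
      apply (simp add: E_lift[OF vadd_N[OF x y] W] ofv_vadd E_lift[OF x W] E_lift[OF y W])
      using EQ_add by simp
    have "(of_int (bN (E W x) (E W y)) :: rat) = of_int (bN x y)"
      by (simp add: bN_ofv[symmetric] E_lift[OF x W] E_lift[OF y W] EQ_iso)
    then show "bN (E W x) (E W y) = bN x y" by simp
  next
    fix x assume x: "x \<in> N_lat"
    show "E W (rho x) = rho (E W x)"
      apply (rule ofv_inj)
      by (simp add: E_lift[OF rho_N[OF x] W] ofv_rho E_lift[OF x W] EQ_rho)
  qed
qed

definition be1 :: "(nat \<Rightarrow> int) \<Rightarrow> int" where "be1 x = x 1 + x 3"
definition be2 :: "(nat \<Rightarrow> int) \<Rightarrow> int" where "be2 x = - x 3"
definition al1 :: "(nat \<Rightarrow> int) \<Rightarrow> int" where "al1 x = x 0 - x 2"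
definition al2 :: "(nat \<Rightarrow> int) \<Rightarrow> int" where "al2 x = - x 2"
definition nb :: "(nat \<Rightarrow> int) \<Rightarrow> int" where "nb x = be1 x ^ 2 + be2 x ^ 2"
definition na :: "(nat \<Rightarrow> int) \<Rightarrow> int" where "na x = al1 x ^ 2 + al2 x ^ 2"

definition root :: "(nat \<Rightarrow> int) \<Rightarrow> bool" where "root x \<longleftrightarrow> x \<in> N_lat \<and> bN x x = -2"

definition r1 :: "nat \<Rightarrow> int" where
  "r1 = (\<lambda>i. if i = 0 then -1 else if i = 1 then 1 else if i = 2 then -1 else 0)"

definition reach :: "(nat \<Rightarrow> int) \<Rightarrow> bool" where "reach x \<longleftrightarrow> (\<exists>g. good g \<and> g x = r1)"

lemma reach_step: assumes "good g" "reach (g x)" shows "reach x"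
proof -
  obtain h where "good h" "h (g x) = r1" using assms(2) reach_def by auto
  then show ?thesis unfolding reach_def using good_comp[OF \<open>good h\<close> assms(1)] by auto
qed

lemma root_good: "good g \<Longrightarrow> root x \<Longrightarrow> root (g x)"
  unfolding root_def using good_N good_bN by metis

lemma sig_be: "be1 (sig x) = al1 x" "be2 (sig x) = al2 x"
  by (simp_all add: be1_def be2_def al1_def al2_def sig_def)

lemma sig_nb: "nb (sig x) = na x" by (simp add: nb_def na_def sig_be)

lemma na0: "na x = 0 \<Longrightarrow> x 0 = x 2"
  unfolding na_def al1_def al2_def
  by (metis add_cancel_right_left eq_iff_diff_eq_0 power_eq_0_iff sum_power2_eq_zero_iff zero_neq_numeral)

lemma nb_nonneg: "nb x \<ge> 0" by (simp add: nb_def)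
lemma na_nonneg: "na x \<ge> 0" by (simp add: na_def)

lemma rho_iter: "good (rho \<circ> rho)" "good (rho \<circ> rho \<circ> rho)"
  using good_comp rho_good by blast+

lemma sq1: assumes "(a::int)^2 + b^2 = 1"
  shows "(b = 0 \<and> (a = 1 \<or> a = -1)) \<or> (a = 0 \<and> (b = 1 \<or> b = -1))"
proof -
  have "a^2 \<le> 1" using assms zero_le_power2[of b] by linarith
  have "b^2 \<le> 1" using assms zero_le_power2[of a] by linarith
  then have "\<bar>a\<bar> \<le> 1" "\<bar>b\<bar> \<le> 1" using \<open>a^2 \<le> 1\<close> by (simp_all add: abs_square_le_1)
  then have "a \<in> {-1,0,1}" "b \<in> {-1,0,1}" by auto
  then show ?thesis using assms by auto
qed

lemma lemB0: assumes "root y" "\<And>j. 4 \<le> j \<Longrightarrow> j < 12 \<Longrightarrow> y j = 0" "nb y = 1" shows "reach y"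
proof -
  have yN: "y \<in> N_lat" and nrm: "bN y y = -2" using assms(1) root_def by auto
  have z: "\<And>j. 12 \<le> j \<Longrightarrow> y j = 0" using N_latD(1)[OF yN] by auto
  have n2: "2 * y 0 * y 1 + 4 * y 2 * y 3 = -2"
    using nrm assms(2)[of 4] assms(2)[of 5] assms(2)[of 6] assms(2)[of 7] assms(2)[of 8]
      assms(2)[of 9] assms(2)[of 10] assms(2)[of 11] by (simp add: bN_exp algebra_simps)
  have u: "(y 1 + y 3)^2 + y 3 ^2 = 1" using assms(3) by (simp add: nb_def be1_def be2_def)
  have cases: "(y 3 = 0 \<and> y 1 = 1) \<or> (y 3 = 0 \<and> y 1 = -1) \<or> (y 3 = -1 \<and> y 1 = 1) \<or> (y 3 = 1 \<and> y 1 = -1)"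
    using sq1[OF u] by auto
  have eq: "\<And>w. (\<And>i. i \<ge> 4 \<Longrightarrow> w i = 0) \<Longrightarrow> w 0 = r1 0 \<Longrightarrow> w 1 = r1 1 \<Longrightarrow> w 2 = r1 2 \<Longrightarrow> w 3 = r1 3 \<Longrightarrow> w = r1"
    by (rule ext, rule cases12) (auto simp: r1_def)
  have zK: "\<And>i. 4 \<le> i \<Longrightarrow> y i = 0" using assms(2) z by (meson not_le)
  from cases show ?thesis
  proof (elim disjE conjE)
    assume a: "y 3 = 0" "y 1 = 1"
    have "T (y 2 + 1) y = r1" by (rule eq) (use zK a n2 in \<open>auto simp: T_def r1_def\<close>)
    then show ?thesis using T_good reach_def by blast
  next
    assume a: "y 3 = 0" "y 1 = -1"
    have "(rho \<circ> rho) (T (1 - y 2) y) = r1"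
      by (rule eq) (use zK a n2 in \<open>auto simp: T_def r1_def rho_def\<close>)
    then show ?thesis using good_comp[OF rho_iter(1) T_good] reach_def by (metis comp_apply)
  next
    assume a: "y 3 = -1" "y 1 = 1"
    have "(rho \<circ> rho \<circ> rho) (T (y 2) y) = r1"
      by (rule eq) (use zK a n2 in \<open>auto simp: T_def r1_def rho_def\<close>)
    then show ?thesis using good_comp[OF rho_iter(2) T_good] reach_def by (metis comp_apply)
  next
    assume a: "y 3 = 1" "y 1 = -1"
    have "rho (T (- y 2) y) = r1"
      by (rule eq) (use zK a n2 in \<open>auto simp: T_def r1_def rho_def\<close>)
    then show ?thesis using good_comp[OF rho_good T_good] reach_def by (metis comp_apply)
  qed
qed

definition gact :: "int \<Rightarrow> int \<Rightarrow> (nat \<Rightarrow> int) \<Rightarrow> (nat \<Rightarrow> int)" where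
  "gact p q v = (\<lambda>i. if 4 \<le> i \<and> i < 12 then p * v i + q * rho v i else 0)"

lemma okW_gact: assumes v: "v \<in> N_lat" and pq: "even (p - q)" shows "okW (gact p q v)"
proof -
  from pq obtain d where "p - q = 2 * d" by (rule evenE)
  then have p: "p = q + 2 * d" by simp
  from N_latD(2)[OF v] obtain s1 where "v 4 + v 5 + v 6 + v 7 = 2 * s1" by (rule evenE)
  then have v6: "v 6 = 2 * s1 - v 4 - v 5 - v 7" by simp
  from N_latD(3)[OF v] obtain s2 where "v 8 + v 9 + v 10 + v 11 = 2 * s2" by (rule evenE)
  then have v10: "v 10 = 2 * s2 - v 8 - v 9 - v 11" by simp
  let ?W = "gact p q v"
  have "?W 5 - ?W 4 = 2 * (d * (v 5 - v 4) - q * v 4)" by (simp add: gact_def rho_def p algebra_simps)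
  moreover have "?W 6 - ?W 4 = 2 * (q * (s1 - v 4 - v 5) + d * (v 6 - v 4))" by (simp add: gact_def rho_def p v6 algebra_simps)
  moreover have "?W 7 - ?W 4 = 2 * (q * (v 7 - s1) + d * (v 7 - v 4))" by (simp add: gact_def rho_def p v6 algebra_simps)
  moreover have "?W 9 - ?W 8 = 2 * (d * (v 9 - v 8) - q * v 8)" by (simp add: gact_def rho_def p algebra_simps)
  moreover have "?W 10 - ?W 8 = 2 * (q * (s2 - v 8 - v 9) + d * (v 10 - v 8))" by (simp add: gact_def rho_def p v10 algebra_simps)
  moreover have "?W 11 - ?W 8 = 2 * (q * (v 11 - s2) + d * (v 11 - v 8))" by (simp add: gact_def rho_def p v10 algebra_simps)
  moreover have "\<forall>i. (i < 4 \<or> 12 \<le> i) \<longrightarrow> ?W i = 0" by (simp add: gact_def)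
  ultimately show ?thesis unfolding okW_def by (metis dvd_triv_left)
qed

lemma E_13: "E W x 1 = x 1" "E W x 3 = x 3"
  by (simp_all add: E_def Let_def)

lemma E_K2: assumes "okW W" "4 \<le> j" "j < 12"
  shows "2 * E W x j = 2 * x j + x 1 * (W j - rho W j) - 2 * x 3 * rho W j"
proof -
  from ev4[OF assms] obtain D where D: "W j - rho W j = 2 * D" by (rule evenE)
  then show ?thesis using assms(2,3) by (simp add: E_def Let_def algebra_simps)
qed

lemma E_outK: "12 \<le> j \<Longrightarrow> E W x j = x j"
  by (simp add: E_def Let_def)

lemma lemB: assumes r: "root x" and n1: "nb x = 1" shows "reach x"
proof -
  have xN: "x \<in> N_lat" using r root_def by auto
  define p where "p = be1 x + be2 x"
  define q where "q = be1 x - be2 x"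
  define W where "W = negv (gact p q x)"
  have pq: "even (p - q)" by (simp add: p_def q_def)
  have W: "okW W" unfolding W_def by (rule okW_neg[OF okW_gact[OF xN pq]])
  let ?y = "E W x"
  have ry: "root ?y" using root_good[OF E_good[OF W] r] .
  have "nb ?y = nb x" unfolding nb_def be1_def be2_def E_13 ..
  then have nby: "nb ?y = 1" using n1 by simp
  have K: "?y j = 0" if "4 \<le> j" "j < 12" for j
  proof -
    have "j = 4 \<or> j = 5 \<or> j = 6 \<or> j = 7 \<or> j = 8 \<or> j = 9 \<or> j = 10 \<or> j = 11" using that by presburger
    then have "2 * ?y j = 2 * (1 - nb x) * x j"
      using E_K2[OF W that, of x]
      by (elim disjE) (simp_all add: W_def negv_def gact_def rho_def p_def q_def nb_def be1_def be2_def power2_eq_square algebra_simps)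
    then show ?thesis using n1 by simp
  qed
  show ?thesis using reach_step[OF E_good[OF W] lemB0[OF ry K nby]] .
qed

definition vpM :: "(nat \<Rightarrow> int) \<Rightarrow> (nat \<Rightarrow> int)" where
  "vpM v = (\<lambda>i. if i = 4 then v 4 - v 6 else if i = 5 then v 5 + v 7 else if i = 6 then v 6 + v 4
     else if i = 7 then v 7 - v 5 else if i = 8 then v 8 - v 10 else if i = 9 then v 9 + v 11
     else if i = 10 then v 10 + v 8 else if i = 11 then v 11 - v 9 else 0)"

lemma okW_vpM: assumes v: "v \<in> N_lat" shows "okW (negv (vpM v))"
proof -
  have a: "even (v 4 + v 5 + v 6 + v 7)" "even (v 8 + v 9 + v 10 + v 11)" using N_latD[OF v] by auto
  have "\<forall>i. (i < 4 \<or> 12 \<le> i) \<longrightarrow> negv (vpM v) i = 0" by (simp add: negv_def vpM_def)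
  moreover have "even (negv (vpM v) 5 - negv (vpM v) 4)" "even (negv (vpM v) 6 - negv (vpM v) 4)"
     "even (negv (vpM v) 7 - negv (vpM v) 4)"
    using a(1) by (simp_all add: negv_def vpM_def) presburger+
  moreover have "even (negv (vpM v) 9 - negv (vpM v) 8)" "even (negv (vpM v) 10 - negv (vpM v) 8)"
     "even (negv (vpM v) 11 - negv (vpM v) 8)"
    using a(2) by (simp_all add: negv_def vpM_def) presburger+
  ultimately show ?thesis unfolding okW_def by blast
qed

lemma root_K2: assumes "root x" "x 0 = 0" "x 2 = 0"
  shows "x 4 ^ 2 + x 5 ^ 2 + x 6 ^ 2 + x 7 ^ 2 + x 8 ^ 2 + x 9 ^ 2 + x 10 ^ 2 + x 11 ^ 2 = 2"
  using assms unfolding root_def by (simp add: bN_exp power2_eq_square)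

lemma lemS: assumes r: "root x" and a: "x 0 = 0" "x 2 = 0" "x 1 = 2" "x 3 = -1" shows "reach x"
proof -
  have xN: "x \<in> N_lat" using r root_def by auto
  have s2: "x 4 ^ 2 + x 5 ^ 2 + x 6 ^ 2 + x 7 ^ 2 + x 8 ^ 2 + x 9 ^ 2 + x 10 ^ 2 + x 11 ^ 2 = 2"
    using root_K2[OF r a(1,2)] .
  define W where "W = negv (vpM x)"
  have W: "okW W" unfolding W_def by (rule okW_vpM[OF xN])
  have S1: "(\<Sum>j\<in>{4..<12}. x j * W j) = -2"
    using s2 by (simp add: sum412 W_def negv_def vpM_def power2_eq_square algebra_simps)
  have S2: "(\<Sum>j\<in>{4..<12}. x j * rho W j) = 0"
    by (simp add: sum412 W_def negv_def vpM_def rho_def algebra_simps)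
  have S3: "(\<Sum>j\<in>{4..<12}. W j ^ 2) = 4"
    using s2 by (simp add: sum412 W_def negv_def vpM_def power2_eq_square algebra_simps)
  let ?y = "E W x"
  have y0: "?y 0 = -1" using a by (simp add: E_def Let_def S1 S2 S3)
  have y2: "?y 2 = -1" using a by (simp add: E_def Let_def S1 S2 S3)
  have ry: "root ?y" using root_good[OF E_good[OF W] r] .
  have rz: "root (sig ?y)" using root_good[OF sig_good ry] .
  have "nb (sig ?y) = 1" using y0 y2 by (simp add: sig_nb na_def al1_def al2_def)
  then have "reach (sig ?y)" using lemB[OF rz] by simp
  then have "reach ?y" using reach_step[OF sig_good] by blast
  then show ?thesis using reach_step[OF E_good[OF W]] by blast
qed

lemma lemZ: assumes r: "root x" and a: "x 0 = 0" "x 2 = 0" shows "reach x"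
proof -
  have xN: "x \<in> N_lat" using r root_def by auto
  have s2: "x 4 ^ 2 + x 5 ^ 2 + x 6 ^ 2 + x 7 ^ 2 + x 8 ^ 2 + x 9 ^ 2 + x 10 ^ 2 + x 11 ^ 2 = 2"
    using root_K2[OF r a] .
  let ?y = "sig x"
  have yN: "?y \<in> N_lat" using sig_N[OF xN] .
  have ry: "root ?y" using root_good[OF sig_good r] .
  define A1 where "A1 = - x 3"
  define A2 where "A2 = - (x 1 + x 3)"
  define t2 :: int where "t2 = (if odd (A1 + A2) then 0 else 1)"
  define p where "p = 1 - A1"
  define q where "q = A2 - t2"
  have pq: "even (p - q)" unfolding p_def q_def t2_def by auto
  define W where "W = gact p q ?y"
  have W: "okW W" unfolding W_def by (rule okW_gact[OF yN pq])
  have "(\<Sum>j\<in>{4..<12}. ?y j * W j) = p * (x 4 ^ 2 + x 5 ^ 2 + x 6 ^ 2 + x 7 ^ 2 + x 8 ^ 2 + x 9 ^ 2 + x 10 ^ 2 + x 11 ^ 2)"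
    by (simp add: sum412 W_def gact_def sig_def rho_def power2_eq_square algebra_simps)
  then have S1: "(\<Sum>j\<in>{4..<12}. ?y j * W j) = 2 * p" using s2 by simp
  have "(\<Sum>j\<in>{4..<12}. ?y j * rho W j) = - q * (x 4 ^ 2 + x 5 ^ 2 + x 6 ^ 2 + x 7 ^ 2 + x 8 ^ 2 + x 9 ^ 2 + x 10 ^ 2 + x 11 ^ 2)"
    by (simp add: sum412 W_def gact_def sig_def rho_def power2_eq_square algebra_simps)
  then have S2: "(\<Sum>j\<in>{4..<12}. ?y j * rho W j) = - 2 * q" using s2 by simp
  let ?z = "E W ?y"
  have z0: "?z 0 = x 1 + p + q" using a unfolding E_def Let_def S1 S2 by (simp add: sig_def)
  have z2: "?z 2 = x 1 + x 3 + q" using a unfolding E_def Let_def S1 S2 by (simp add: sig_def)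
  have z1: "?z 1 = 0" "?z 3 = 0" unfolding E_13 using a by (simp_all add: sig_def)
  let ?w = "sig ?z"
  have rz: "root ?z" using root_good[OF E_good[OF W] ry] .
  have rw: "root ?w" using root_good[OF sig_good rz] .
  have w02: "?w 0 = 0" "?w 2 = 0" using z1 by (simp_all add: sig_def)
  have w1: "?w 1 = x 1 + p + q - 2 * (x 1 + x 3 + q)" using z0 z2 by (simp add: sig_def)
  have w3: "?w 3 = x 1 + x 3 + q" using z2 by (simp add: sig_def)
  have rwz: "reach ?w"
  proof (cases "odd (A1 + A2)")
    case True
    then have "t2 = 0" by (simp add: t2_def)
    then have "nb ?w = 1" using w1 w3
      by (simp add: nb_def be1_def be2_def p_def q_def A1_def A2_def algebra_simps)
    then show ?thesis using lemB[OF rw] by simp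
  next
    case False
    then have "t2 = 1" by (simp add: t2_def)
    then have "?w 1 = 2" "?w 3 = -1" using w1 w3 by (simp_all add: p_def q_def A1_def A2_def algebra_simps)
    then show ?thesis using lemS[OF rw w02] by simp
  qed
  have "reach ?z" using reach_step[OF sig_good rwz] .
  then have "reach ?y" using reach_step[OF E_good[OF W]] by blast
  then show ?thesis using reach_step[OF sig_good] by blast
qed

definition wsel :: "int \<Rightarrow> int \<Rightarrow> int \<Rightarrow> int" where
  "wsel n P a = (if even (a div n - P) then - (a div n) else - (a div n) - 1)"

definition cost :: "int \<Rightarrow> int \<Rightarrow> int \<Rightarrow> int" where
  "cost n P a = (if even (a div n - P) then (a mod n)^2 else (n - a mod n)^2)"

lemma wsel_sq: "n > 0 \<Longrightarrow> (a + n * wsel n P a)^2 = cost n P a"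
proof -
  assume n: "n > 0"
  have a: "a = n * (a div n) + a mod n" by simp
  show ?thesis
  proof (cases "even (a div n - P)")
    case True
    then have "a + n * wsel n P a = a mod n" unfolding wsel_def using a by (simp add: algebra_simps)
    then show ?thesis using True by (simp add: cost_def)
  next
    case False
    then have "a + n * wsel n P a = - (n - a mod n)" unfolding wsel_def
      by (simp add: algebra_simps)
    then show ?thesis using False by (simp add: cost_def power2_commute)
  qed
qed

lemma cost_sum: assumes n: "n > 0" shows "cost n 0 a + cost n 1 a \<le> n^2"
proof -
  define r where "r = a mod n"
  have r0: "0 \<le> r" "r < n" using n by (simp_all add: r_def)
  have "r * (r - n) \<le> 0" using r0 by (simp add: mult_nonneg_nonpos)
  then have key: "r^2 + (n - r)^2 \<le> n^2" by (simp add: power2_eq_square algebra_simps)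
  show ?thesis
  proof (cases "even (a div n)")
    case True
    then have "cost n 0 a = r^2" "cost n 1 a = (n - r)^2" by (simp_all add: cost_def r_def)
    then show ?thesis using key by simp
  next
    case False
    then have "cost n 0 a = (n - r)^2" "cost n 1 a = r^2" by (simp_all add: cost_def r_def)
    then show ?thesis using key by simp
  qed
qed

lemma wsel_par: "even (wsel n P a - P)"
proof -
  have "\<And>m::int. even ((if even (m - P) then - m else - m - 1) - P)" by presburger
  then show ?thesis unfolding wsel_def by blast
qed

definition ReF :: "(nat \<Rightarrow> int) \<Rightarrow> int" where
  "ReF x = (al1 x * be1 x + al2 x * be2 x) - (al2 x * be1 x - al1 x * be2 x)"
definition ImF :: "(nat \<Rightarrow> int) \<Rightarrow> int" where
  "ImF x = (al1 x * be1 x + al2 x * be2 x) + (al2 x * be1 x - al1 x * be2 x)"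

lemma ReF_eq: "ReF x = x 0 * x 1 + 2 * x 2 * x 3"
  by (simp add: ReF_def al1_def al2_def be1_def be2_def algebra_simps)

lemma lagr: "ReF x ^ 2 + ImF x ^ 2 = 2 * na x * nb x"
  by (simp add: ReF_def ImF_def na_def nb_def power2_eq_square algebra_simps)

lemma ImF_T: "ImF (T t y) = ImF y + 2 * t * nb y"
  by (simp add: ImF_def T_def al1_def al2_def be1_def be2_def nb_def power2_eq_square algebra_simps)

lemma nb_T: "nb (T t y) = nb y"
  by (simp add: T_def nb_def be1_def be2_def)

lemma bN_self: "bN x x = 2 * ReF x - (x 4 ^ 2 + x 5 ^ 2 + x 6 ^ 2 + x 7 ^ 2 + x 8 ^ 2 + x 9 ^ 2 + x 10 ^ 2 + x 11 ^ 2)"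
  by (simp add: bN_exp ReF_eq power2_eq_square algebra_simps)

lemma lemA: assumes r: "root x" and n2: "nb x \<ge> 2"
  shows "\<exists>g. good g \<and> root (g x) \<and> nb (g x) = nb x \<and> na (g x) < nb x"
proof -
  have xN: "x \<in> N_lat" using r root_def by auto
  define n where "n = nb x"
  have npos: "n > 0" using n2 n_def by simp
  define p0 where "p0 = x 1"
  define q0 where "q0 = x 1 + 2 * x 3"
  have pq2: "p0^2 + q0^2 = 2 * n"
    by (simp add: p0_def q0_def n_def nb_def be1_def be2_def power2_eq_square algebra_simps)
  define V where "V = gact p0 q0 x"
  define cs1 where "cs1 P = cost n P (V 4) + cost n P (V 5) + cost n P (V 6) + cost n P (V 7)" for P
  define cs2 where "cs2 P = cost n P (V 8) + cost n P (V 9) + cost n P (V 10) + cost n P (V 11)" for P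
  define P1 :: int where "P1 = (if cs1 0 \<le> cs1 1 then 0 else 1)"
  define P2 :: int where "P2 = (if cs2 0 \<le> cs2 1 then 0 else 1)"
  define W where "W = (\<lambda>i. if 4 \<le> i \<and> i < 8 then wsel n P1 (V i)
      else if 8 \<le> i \<and> i < 12 then wsel n P2 (V i) else 0)"
  have W: "okW W"
  proof -
    have a: "\<forall>i. (i < 4 \<or> 12 \<le> i) \<longrightarrow> W i = 0" by (simp add: W_def)
    have e: "even (W j - P1)" if "4 \<le> j" "j < 8" for j using that wsel_par by (simp add: W_def)
    have f: "even (W j - P2)" if "8 \<le> j" "j < 12" for j using that wsel_par by (simp add: W_def)
    have "even (W 5 - W 4)" "even (W 6 - W 4)" "even (W 7 - W 4)"
      using e[of 4] e[of 5] e[of 6] e[of 7] by presburger+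
    moreover have "even (W 9 - W 8)" "even (W 10 - W 8)" "even (W 11 - W 8)"
      using f[of 8] f[of 9] f[of 10] f[of 11] by presburger+
    ultimately show ?thesis using a unfolding okW_def by blast
  qed
  have c1: "cs1 0 + cs1 1 \<le> 4 * n^2"
    using cost_sum[OF npos, of "V 4"] cost_sum[OF npos, of "V 5"] cost_sum[OF npos, of "V 6"]
      cost_sum[OF npos, of "V 7"] unfolding cs1_def by simp
  have c2: "cs2 0 + cs2 1 \<le> 4 * n^2"
    using cost_sum[OF npos, of "V 8"] cost_sum[OF npos, of "V 9"] cost_sum[OF npos, of "V 10"]
      cost_sum[OF npos, of "V 11"] unfolding cs2_def by simp
  have b1: "cs1 P1 \<le> 2 * n^2" using c1 unfolding P1_def by auto
  have b2: "cs2 P2 \<le> 2 * n^2" using c2 unfolding P2_def by auto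
  have sqs: "(V 4 + n * W 4)^2 + (V 5 + n * W 5)^2 + (V 6 + n * W 6)^2 + (V 7 + n * W 7)^2
     + (V 8 + n * W 8)^2 + (V 9 + n * W 9)^2 + (V 10 + n * W 10)^2 + (V 11 + n * W 11)^2 = cs1 P1 + cs2 P2"
    unfolding cs1_def cs2_def by (simp add: W_def wsel_sq[OF npos])
  have bound: "(V 4 + n * W 4)^2 + (V 5 + n * W 5)^2 + (V 6 + n * W 6)^2 + (V 7 + n * W 7)^2
     + (V 8 + n * W 8)^2 + (V 9 + n * W 9)^2 + (V 10 + n * W 10)^2 + (V 11 + n * W 11)^2 \<le> 4 * n^2"
    using sqs b1 b2 by simp
  let ?y = "E W x"
  have e2: "2 * ?y j = 2 * x j + x 1 * (W j - rho W j) - 2 * x 3 * rho W j" if "4 \<le> j" "j < 12" for j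
    using E_K2[OF W that] .
  have idp: "2 * (p0 * ?y j + q0 * ?y k) = 2 * (V j + n * W j)"
    if "(j = 4 \<and> k = 5) \<or> (j = 6 \<and> k = 7) \<or> (j = 8 \<and> k = 9) \<or> (j = 10 \<and> k = 11)" for j k
  proof -
    have jk: "4 \<le> j" "j < 12" "4 \<le> k" "k < 12" using that by auto
    have "2 * (p0 * ?y j + q0 * ?y k) = p0 * (2 * ?y j) + q0 * (2 * ?y k)" by (simp add: algebra_simps)
    also have "\<dots> = p0 * (2 * x j + x 1 * (W j - rho W j) - 2 * x 3 * rho W j)
        + q0 * (2 * x k + x 1 * (W k - rho W k) - 2 * x 3 * rho W k)"
      using e2[OF jk(1,2)] e2[OF jk(3,4)] by simp
    also have "\<dots> = 2 * (V j + n * W j)"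
      using that by (elim disjE) (simp_all add: V_def gact_def rho_def p0_def q0_def n_def nb_def be1_def be2_def power2_eq_square algebra_simps)
    finally show ?thesis .
  qed
  have idm: "2 * (p0 * ?y k - q0 * ?y j) = 2 * (V k + n * W k)"
    if "(j = 4 \<and> k = 5) \<or> (j = 6 \<and> k = 7) \<or> (j = 8 \<and> k = 9) \<or> (j = 10 \<and> k = 11)" for j k
  proof -
    have jk: "4 \<le> j" "j < 12" "4 \<le> k" "k < 12" using that by auto
    have "2 * (p0 * ?y k - q0 * ?y j) = p0 * (2 * ?y k) - q0 * (2 * ?y j)" by (simp add: algebra_simps)
    also have "\<dots> = p0 * (2 * x k + x 1 * (W k - rho W k) - 2 * x 3 * rho W k)
        - q0 * (2 * x j + x 1 * (W j - rho W j) - 2 * x 3 * rho W j)"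
      using e2[OF jk(1,2)] e2[OF jk(3,4)] by simp
    also have "\<dots> = 2 * (V k + n * W k)"
      using that by (elim disjE) (simp_all add: V_def gact_def rho_def p0_def q0_def n_def nb_def be1_def be2_def power2_eq_square algebra_simps)
    finally show ?thesis .
  qed
  define SK where "SK = ?y 4 ^ 2 + ?y 5 ^ 2 + ?y 6 ^ 2 + ?y 7 ^ 2 + ?y 8 ^ 2 + ?y 9 ^ 2 + ?y 10 ^ 2 + ?y 11 ^ 2"
  have "(p0 * ?y 4 + q0 * ?y 5)^2 + (p0 * ?y 5 - q0 * ?y 4)^2 + (p0 * ?y 6 + q0 * ?y 7)^2 + (p0 * ?y 7 - q0 * ?y 6)^2
      + (p0 * ?y 8 + q0 * ?y 9)^2 + (p0 * ?y 9 - q0 * ?y 8)^2 + (p0 * ?y 10 + q0 * ?y 11)^2 + (p0 * ?y 11 - q0 * ?y 10)^2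
      = (p0^2 + q0^2) * SK"
    unfolding SK_def by (simp add: power2_eq_square algebra_simps)
  moreover have "p0 * ?y 4 + q0 * ?y 5 = V 4 + n * W 4" using idp[of 4 5] by simp
  moreover have "p0 * ?y 5 - q0 * ?y 4 = V 5 + n * W 5" using idm[of 4 5] by simp
  moreover have "p0 * ?y 6 + q0 * ?y 7 = V 6 + n * W 6" using idp[of 6 7] by simp
  moreover have "p0 * ?y 7 - q0 * ?y 6 = V 7 + n * W 7" using idm[of 6 7] by simp
  moreover have "p0 * ?y 8 + q0 * ?y 9 = V 8 + n * W 8" using idp[of 8 9] by simp
  moreover have "p0 * ?y 9 - q0 * ?y 8 = V 9 + n * W 9" using idm[of 8 9] by simp
  moreover have "p0 * ?y 10 + q0 * ?y 11 = V 10 + n * W 10" using idp[of 10 11] by simp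
  moreover have "p0 * ?y 11 - q0 * ?y 10 = V 11 + n * W 11" using idm[of 10 11] by simp
  ultimately have "(2 * n) * SK \<le> (2 * n) * (2 * n)" using bound pq2 by (simp add: power2_eq_square)
  then have SKb: "SK \<le> 2 * n" using npos by simp
  have SK0: "SK \<ge> 0" unfolding SK_def by simp
  define t where "t = (n - ImF ?y) div (2 * n)"
  let ?z = "T t ?y"
  let ?g = "T t \<circ> E W"
  have gg: "good ?g" using good_comp[OF T_good E_good[OF W]] .
  have rz: "root ?z" using root_good[OF gg r] by simp
  have nby: "nb ?y = nb x" unfolding nb_def be1_def be2_def E_13 ..
  have nbz: "nb ?z = n" using nb_T[of t ?y] nby n_def by simp
  have Imz: "ImF ?z = ImF ?y + 2 * t * n"
    using ImF_T[of t ?y] nbz nb_T[of t ?y] by simp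
  have Imb: "- n < ImF ?z \<and> ImF ?z \<le> n"
  proof -
    define u where "u = n - ImF ?y"
    have "u = (2 * n) * (u div (2 * n)) + u mod (2 * n)" by simp
    moreover have "0 \<le> u mod (2 * n)" "u mod (2 * n) < 2 * n" using npos by simp_all
    ultimately show ?thesis using Imz unfolding t_def u_def by (simp add: algebra_simps)
  qed
  have SKz: "?z 4 ^ 2 + ?z 5 ^ 2 + ?z 6 ^ 2 + ?z 7 ^ 2 + ?z 8 ^ 2 + ?z 9 ^ 2 + ?z 10 ^ 2 + ?z 11 ^ 2 = SK"
    unfolding SK_def by (simp add: T_def)
  have "bN ?z ?z = -2" using rz root_def by auto
  then have Re2: "2 * ReF ?z = SK - 2" using bN_self[of ?z] SKz by simp
  have Reb: "\<bar>ReF ?z\<bar> \<le> n - 1" using Re2 SKb SK0 n2 n_def by simp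
  have Imb2: "\<bar>ImF ?z\<bar> \<le> n" using Imb by (simp add: abs_le_iff)
  have "ReF ?z ^ 2 \<le> (n - 1)^2" using Reb abs_le_square_iff[of "ReF ?z" "n - 1"] n2 n_def by simp
  moreover have "ImF ?z ^ 2 \<le> n^2" using Imb2 abs_le_square_iff[of "ImF ?z" n] npos by simp
  ultimately have "2 * na ?z * n \<le> (n - 1)^2 + n^2" using lagr[of ?z] nbz by simp
  also have "\<dots> < 2 * n * n" using npos by (simp add: power2_eq_square algebra_simps)
  finally have "na ?z * n < n * n" by simp
  then have "na ?z < n" using npos by (simp add: mult_less_cancel_right)
  then show ?thesis using gg rz nbz n_def by (intro exI[of _ ?g]) simp
qed

lemma na0': "na x = 0 \<Longrightarrow> x 0 = 0 \<and> x 2 = 0"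
proof -
  assume "na x = 0"
  then have "al1 x = 0 \<and> al2 x = 0" unfolding na_def by (simp add: sum_power2_eq_zero_iff)
  then show ?thesis by (simp add: al1_def al2_def)
qed

lemma reach_pos: "\<And>x. root x \<Longrightarrow> nb x = int m \<Longrightarrow> m \<ge> 1 \<Longrightarrow> reach x"
proof (induction m rule: less_induct)
  case (less m)
  fix x assume r: "root x" and nbm: "nb x = int m" and m1: "m \<ge> 1"
  show "reach x"
  proof (cases "m = 1")
    case True
    then show ?thesis using lemB[OF r] nbm by simp
  next
    case False
    then have "nb x \<ge> 2" using nbm m1 by simp
    then obtain g where g: "good g" "root (g x)" "nb (g x) = nb x" "na (g x) < nb x"
      using lemA[OF r] by blast
    let ?y = "g x"
    have ry: "reach ?y"
    proof (cases "na ?y = 0")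
      case True
      then show ?thesis using lemZ[OF g(2)] na0'[OF True] by simp
    next
      case False
      then have pos: "na ?y \<ge> 1" using na_nonneg[of ?y] by simp
      define k where "k = nat (na ?y)"
      have k: "nb (sig ?y) = int k" using sig_nb[of ?y] pos k_def by simp
      have "k < m" using g(4) nbm pos k_def by simp
      moreover have "k \<ge> 1" using pos k_def by simp
      moreover have "root (sig ?y)" using root_good[OF sig_good g(2)] .
      ultimately have "reach (sig ?y)" using less.IH k by blast
      then show ?thesis using reach_step[OF sig_good] by blast
    qed
    then show ?thesis using reach_step[OF g(1)] by blast
  qed
qed

lemma reach_all: assumes r: "root x" shows "reach x"
proof (cases "nb x \<ge> 1")
  case True
  then show ?thesis using reach_pos[OF r, of "nat (nb x)"] by simp
next
  case False
  show ?thesis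
  proof (cases "na x = 0")
    case True
    then show ?thesis using lemZ[OF r] na0'[OF True] by simp
  next
    case False
    then have pos: "na x \<ge> 1" using na_nonneg[of x] by simp
    have "root (sig x)" using root_good[OF sig_good r] .
    moreover have "nb (sig x) = int (nat (na x))" using sig_nb[of x] pos by simp
    ultimately have "reach (sig x)" using reach_pos[of "sig x" "nat (na x)"] pos by simp
    then show ?thesis using reach_step[OF sig_good] by blast
  qed
qed

lemma bN_lin_right: "bN z (\<lambda>i. m * a i + n * b i) = m * bN z a + n * bN z b"
  by (simp add: bN_exp algebra_simps)

lemma bN_lin_left: "bN (\<lambda>i. m * a i + n * b i) z = m * bN a z + n * bN b z"
  by (simp add: bN_exp algebra_simps)

lemma orth_iff: "x \<in> orth_compl (R_lat r) \<longleftrightarrow> x \<in> N_lat \<and> bN x r = 0 \<and> bN x (rho r) = 0"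
proof
  assume a: "x \<in> orth_compl (R_lat r)"
  have "r \<in> R_lat r" unfolding R_lat_def by (rule CollectI, rule exI[of _ 1], rule exI[of _ 0]) simp
  moreover have "rho r \<in> R_lat r" unfolding R_lat_def by (rule CollectI, rule exI[of _ 0], rule exI[of _ 1]) simp
  ultimately show "x \<in> N_lat \<and> bN x r = 0 \<and> bN x (rho r) = 0" using a unfolding orth_compl_def by auto
next
  assume a: "x \<in> N_lat \<and> bN x r = 0 \<and> bN x (rho r) = 0"
  then show "x \<in> orth_compl (R_lat r)" unfolding orth_compl_def R_lat_def by (auto simp: bN_lin_right)
qed

definition r0 :: "nat \<Rightarrow> int" where "r0 = (\<lambda>i. if i = 8 \<or> i = 9 then 1 else 0)"

lemma root_r0: "root r0"
  unfolding root_def by (auto intro!: N_latI simp: r0_def bN_exp)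

definition phi :: "(nat \<Rightarrow> int) \<Rightarrow> (nat \<Rightarrow> int)" where
  "phi x = (\<lambda>i. if i < 8 then x i else if i = 8 then (x 10 + x 11) div 2
     else if i = 9 then (x 10 - x 11) div 2 else 0)"

definition psi :: "(nat \<Rightarrow> int) \<Rightarrow> (nat \<Rightarrow> int)" where
  "psi m = (\<lambda>i. if i < 8 then m i else if i = 10 then m 8 + m 9 else if i = 11 then m 8 - m 9 else 0)"

lemma C0_iff: "x \<in> orth_compl (R_lat r0) \<longleftrightarrow> x \<in> N_lat \<and> x 8 = 0 \<and> x 9 = 0"
  unfolding orth_iff by (auto simp: bN_exp r0_def rho_def)

lemma C0_ab: assumes "x \<in> orth_compl (R_lat r0)"
  obtains a b where "x 10 = a + b" "x 11 = a - b" "(x 10 + x 11) div 2 = a" "(x 10 - x 11) div 2 = b"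
proof -
  have x: "x \<in> N_lat" "x 8 = 0" "x 9 = 0" using assms C0_iff by auto
  have "even (x 10 + x 11)" using N_latD(3)[OF x(1)] x(2,3) by simp
  then obtain a where a: "x 10 + x 11 = 2 * a" by (rule evenE)
  define b where "b = x 10 - a"
  have "x 10 = a + b" "x 11 = a - b" using a b_def by simp_all
  moreover have "(x 10 + x 11) div 2 = a" "(x 10 - x 11) div 2 = b" using calculation by simp_all
  ultimately show ?thesis using that by blast
qed

lemma phi_bij: "bij_betw phi (orth_compl (R_lat r0)) M_lat"
proof (rule bij_betw_byWitness[where f' = psi])
  show "\<forall>x\<in>orth_compl (R_lat r0). psi (phi x) = x"
  proof
    fix x assume xc: "x \<in> orth_compl (R_lat r0)"
    obtain a b where ab: "x 10 = a + b" "x 11 = a - b" "(x 10 + x 11) div 2 = a" "(x 10 - x 11) div 2 = b"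
      using C0_ab[OF xc] by blast
    have x: "x \<in> N_lat" "x 8 = 0" "x 9 = 0" using xc C0_iff by auto
    show "psi (phi x) = x"
      by (rule ext, rule cases12) (use ab x N_latD(1)[OF x(1)] in \<open>simp_all add: psi_def phi_def\<close>)
  qed
  show "\<forall>m\<in>M_lat. phi (psi m) = m"
  proof
    fix m assume "m \<in> M_lat"
    then have z: "\<And>i. i \<ge> 10 \<Longrightarrow> m i = 0" by (auto simp: M_lat_def supp_in_def)
    show "phi (psi m) = m"
    proof (rule ext)
      fix i show "phi (psi m) i = m i"
        by (rule cases12[of _ i]) (use z in \<open>simp_all add: psi_def phi_def\<close>)
    qed
  qed
  show "phi ` orth_compl (R_lat r0) \<subseteq> M_lat"
  proof
    fix y assume "y \<in> phi ` orth_compl (R_lat r0)"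
    then obtain x where xc: "x \<in> orth_compl (R_lat r0)" and y: "y = phi x" by blast
    have x: "x \<in> N_lat" using xc C0_iff by auto
    show "y \<in> M_lat" unfolding M_lat_def supp_in_def y using N_latD(2)[OF x] by (simp add: phi_def)
  qed
  show "psi ` M_lat \<subseteq> orth_compl (R_lat r0)"
  proof
    fix y assume "y \<in> psi ` M_lat"
    then obtain m where m: "m \<in> M_lat" and y: "y = psi m" by blast
    have "even (m 4 + m 5 + m 6 + m 7)" using m by (simp add: M_lat_def)
    then have "y \<in> N_lat" unfolding y by (intro N_latI) (simp_all add: psi_def)
    moreover have "y 8 = 0" "y 9 = 0" by (simp_all add: y psi_def)
    ultimately show "y \<in> orth_compl (R_lat r0)" using C0_iff by simp
  qed
qed

lemma phi_add: assumes "x \<in> orth_compl (R_lat r0)" "y \<in> orth_compl (R_lat r0)"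
  shows "phi (\<lambda>i. x i + y i) = (\<lambda>i. phi x i + phi y i)"
proof -
  obtain a b where ab: "x 10 = a + b" "x 11 = a - b" "(x 10 + x 11) div 2 = a" "(x 10 - x 11) div 2 = b"
    using C0_ab[OF assms(1)] by blast
  obtain c d where cd: "y 10 = c + d" "y 11 = c - d" "(y 10 + y 11) div 2 = c" "(y 10 - y 11) div 2 = d"
    using C0_ab[OF assms(2)] by blast
  have "(x 10 + y 10 + (x 11 + y 11)) div 2 = a + c" using ab cd by simp
  moreover have "(x 10 + y 10 - (x 11 + y 11)) div 2 = b + d" using ab cd by simp
  ultimately show ?thesis using ab cd by (auto simp: phi_def)
qed

lemma phi_form: assumes "x \<in> orth_compl (R_lat r0)" "y \<in> orth_compl (R_lat r0)"
  shows "bM (phi x) (phi y) = bN x y"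
proof -
  obtain a b where ab: "x 10 = a + b" "x 11 = a - b" "(x 10 + x 11) div 2 = a" "(x 10 - x 11) div 2 = b"
    using C0_ab[OF assms(1)] by blast
  obtain c d where cd: "y 10 = c + d" "y 11 = c - d" "(y 10 + y 11) div 2 = c" "(y 10 - y 11) div 2 = d"
    using C0_ab[OF assms(2)] by blast
  have z: "x 8 = 0" "x 9 = 0" "y 8 = 0" "y 9 = 0" using assms C0_iff by auto
  have bM_e: "bM u v = u 0 * v 1 + u 1 * v 0 + 2 * (u 2 * v 3 + u 3 * v 2)
     - (u 4 * v 4 + u 5 * v 5 + u 6 * v 6 + u 7 * v 7) - 2 * u 8 * v 8 - 2 * u 9 * v 9" for u v
    by (simp add: bM_def numeral_eq_Suc atLeastLessThanSuc algebra_simps)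
  have p: "phi x 8 = a" "phi x 9 = b" "phi y 8 = c" "phi y 9 = d"
    using ab cd by (simp_all add: phi_def)
  have q: "phi u j = u j" if "j < 8" for u j using that by (simp add: phi_def)
  have "bM (phi x) (phi y) = x 0 * y 1 + x 1 * y 0 + 2 * (x 2 * y 3 + x 3 * y 2)
     - (x 4 * y 4 + x 5 * y 5 + x 6 * y 6 + x 7 * y 7) - 2 * a * c - 2 * b * d"
    unfolding bM_e p by (simp add: q)
  also have "\<dots> = bN x y" unfolding bN_exp z ab(1,2) cd(1,2) by (simp add: algebra_simps)
  finally show ?thesis .
qed

lemma transport: assumes h: "good h" and rN: "r \<in> N_lat" and hr: "h r = r0"
  shows "bij_betw h (orth_compl (R_lat r)) (orth_compl (R_lat r0))"
proof -
  have bij: "bij_betw h N_lat N_lat" using good_bij[OF h] .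
  have sub: "orth_compl (R_lat r) \<subseteq> N_lat" using orth_iff by auto
  have rhoN: "rho r \<in> N_lat" using rho_N[OF rN] .
  have hrho: "h (rho r) = rho r0" using good_rho[OF h rN] hr by simp
  have inj: "inj_on h (orth_compl (R_lat r))"
    using bij sub unfolding bij_betw_def by (meson inj_on_subset)
  have img: "h ` orth_compl (R_lat r) = orth_compl (R_lat r0)"
  proof
    show "h ` orth_compl (R_lat r) \<subseteq> orth_compl (R_lat r0)"
    proof
      fix y assume "y \<in> h ` orth_compl (R_lat r)"
      then obtain x where x: "x \<in> orth_compl (R_lat r)" and y: "y = h x" by blast
      have xs: "x \<in> N_lat" "bN x r = 0" "bN x (rho r) = 0" using x orth_iff by auto
      have "h x \<in> N_lat" using good_N[OF h xs(1)] .
      moreover have "bN (h x) r0 = 0" using good_bN[OF h xs(1) rN] hr xs(2) by simp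
      moreover have "bN (h x) (rho r0) = 0" using good_bN[OF h xs(1) rhoN] hrho xs(3) by simp
      ultimately show "y \<in> orth_compl (R_lat r0)" using orth_iff y by simp
    qed
  next
    show "orth_compl (R_lat r0) \<subseteq> h ` orth_compl (R_lat r)"
    proof
      fix y assume "y \<in> orth_compl (R_lat r0)"
      then have ys: "y \<in> N_lat" "bN y r0 = 0" "bN y (rho r0) = 0" using orth_iff by auto
      obtain x where x: "x \<in> N_lat" "y = h x" using bij ys(1) unfolding bij_betw_def by blast
      have "bN x r = 0" using good_bN[OF h x(1) rN] hr ys(2) x(2) by simp
      moreover have "bN x (rho r) = 0" using good_bN[OF h x(1) rhoN] hrho ys(3) x(2) by simp
      ultimately have "x \<in> orth_compl (R_lat r)" using orth_iff x(1) by simp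
      then show "y \<in> h ` orth_compl (R_lat r)" using x(2) by blast
    qed
  qed
  show ?thesis using inj img unfolding bij_betw_def by simp
qed

lemma claim2: assumes r: "root r" shows "lattice_iso (orth_compl (R_lat r)) bN M_lat bM"
proof -
  have rN: "r \<in> N_lat" using r root_def by auto
  obtain g where g: "good g" "g r = r1" using reach_all[OF r] reach_def by blast
  obtain g0 where g0: "good g0" "g0 r0 = r1" using reach_all[OF root_r0] reach_def by blast
  have r0N: "r0 \<in> N_lat" using root_r0 root_def by auto
  let ?h = "inv_into N_lat g0 \<circ> g"
  have h: "good ?h" using good_comp[OF good_inv[OF g0(1)] g(1)] .
  have "inv_into N_lat g0 (g0 r0) = r0"
    using good_bij[OF g0(1)] r0N by (meson bij_betw_inv_into_left)
  then have hr: "?h r = r0" using g g0 by simp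
  have bh: "bij_betw ?h (orth_compl (R_lat r)) (orth_compl (R_lat r0))" using transport[OF h rN hr] .
  have sub: "orth_compl (R_lat r) \<subseteq> N_lat" using orth_iff by auto
  show ?thesis unfolding lattice_iso_def
  proof (intro exI[of _ "phi \<circ> ?h"] conjI ballI)
    show "bij_betw (phi \<circ> ?h) (orth_compl (R_lat r)) M_lat" using bij_betw_trans[OF bh phi_bij] .
  next
    fix x y assume x: "x \<in> orth_compl (R_lat r)" and y: "y \<in> orth_compl (R_lat r)"
    have hx: "?h x \<in> orth_compl (R_lat r0)" "?h y \<in> orth_compl (R_lat r0)"
      using bh x y unfolding bij_betw_def by auto
    have "?h (\<lambda>i. x i + y i) = vadd (?h x) (?h y)"
      using good_add[OF h] x y sub unfolding vadd_def by auto
    then show "(phi \<circ> ?h) (\<lambda>i. x i + y i) = (\<lambda>i. (phi \<circ> ?h) x i + (phi \<circ> ?h) y i)"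
      using phi_add[OF hx] by (simp add: vadd_def)
    show "bM ((phi \<circ> ?h) x) ((phi \<circ> ?h) y) = bN x y"
      using phi_form[OF hx] good_bN[OF h] x y sub by auto
  qed
qed

lemma claim1: assumes r: "root r" shows "lattice_iso (R_lat r) bN A1A1_lat bA1A1"
proof -
  have nr: "bN r r = -2" using r root_def by auto
  have nrr: "bN (rho r) (rho r) = -2" using nr bN_rho by simp
  have o1: "bN r (rho r) = 0" by (rule bN_rho_self)
  have o2: "bN (rho r) r = 0" using o1 bN_sym by metis
  define f where "f y = (\<lambda>i::nat. if i = 0 then (- bN y r) div 2 else if i = 1 then (- bN y (rho r)) div 2 else 0)" for y
  define g where "g a = (\<lambda>i. a 0 * r i + a 1 * rho r i)" for a :: "nat \<Rightarrow> int"
  have fmn: "f (\<lambda>i. m * r i + n * rho r i) = (\<lambda>i. if i = 0 then m else if i = 1 then n else 0)" for m n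
    by (rule ext) (simp add: f_def bN_lin_left nr nrr o1 o2)
  have Rchar: "y \<in> R_lat r \<longleftrightarrow> (\<exists>m n. y = (\<lambda>i. m * r i + n * rho r i))" for y
    unfolding R_lat_def by auto
  have B: "bij_betw f (R_lat r) A1A1_lat"
  proof (rule bij_betw_byWitness[where f' = g])
    show "\<forall>y\<in>R_lat r. g (f y) = y"
    proof
      fix y assume "y \<in> R_lat r"
      then obtain m n where "y = (\<lambda>i. m * r i + n * rho r i)" using Rchar by blast
      then show "g (f y) = y" by (simp add: fmn g_def)
    qed
    show "\<forall>a\<in>A1A1_lat. f (g a) = a"
    proof
      fix a assume "a \<in> A1A1_lat"
      then have z: "\<And>i. i \<ge> 2 \<Longrightarrow> a i = 0" by (auto simp: A1A1_lat_def supp_in_def)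
      show "f (g a) = a" unfolding g_def fmn
      proof (rule ext)
        fix i show "(if i = 0 then a 0 else if i = 1 then a 1 else 0) = a i"
          using z[of i] by (cases "i = 0"; cases "i = 1") auto
      qed
    qed
    show "f ` R_lat r \<subseteq> A1A1_lat"
    proof
      fix z assume "z \<in> f ` R_lat r"
      then obtain y where y: "y \<in> R_lat r" "z = f y" by blast
      then obtain m n where "y = (\<lambda>i. m * r i + n * rho r i)" using Rchar by blast
      then show "z \<in> A1A1_lat" using y(2) by (simp add: fmn A1A1_lat_def supp_in_def)
    qed
    show "g ` A1A1_lat \<subseteq> R_lat r"
    proof
      fix z assume "z \<in> g ` A1A1_lat"
      then obtain a where "z = g a" by blast
      then show "z \<in> R_lat r" using Rchar g_def by blast
    qed
  qed
  have A: "f (\<lambda>i. x i + y i) = (\<lambda>i. f x i + f y i) \<and> bA1A1 (f x) (f y) = bN x y"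
    if x: "x \<in> R_lat r" and y: "y \<in> R_lat r" for x y
  proof
    obtain m n where mn: "x = (\<lambda>i. m * r i + n * rho r i)" using x Rchar by blast
    obtain m' n' where mn': "y = (\<lambda>i. m' * r i + n' * rho r i)" using y Rchar by blast
    have s: "(\<lambda>i. x i + y i) = (\<lambda>i. (m + m') * r i + (n + n') * rho r i)"
      unfolding mn mn' by (simp add: algebra_simps)
    show "f (\<lambda>i. x i + y i) = (\<lambda>i. f x i + f y i)"
      unfolding s fmn by (simp add: mn mn' fmn fun_eq_iff)
    show "bA1A1 (f x) (f y) = bN x y"
      unfolding mn mn' fmn by (simp add: bA1A1_def bN_lin_left bN_lin_right nr nrr o1 o2 algebra_simps)
  qed
  show ?thesis unfolding lattice_iso_def using B A by blast
qed

lemma dual_even: assumes r: "r \<in> N_lat" and x: "x \<in> N_lat" shows "even (bN (vadd r (rho r)) x)"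
proof -
  from N_latD(2)[OF r] obtain s1 where "r 4 + r 5 + r 6 + r 7 = 2 * s1" by (rule evenE)
  then have r7: "r 7 = 2 * s1 - r 4 - r 5 - r 6" by simp
  from N_latD(3)[OF r] obtain s2 where "r 8 + r 9 + r 10 + r 11 = 2 * s2" by (rule evenE)
  then have r11: "r 11 = 2 * s2 - r 8 - r 9 - r 10" by simp
  from N_latD(2)[OF x] obtain t1 where "x 4 + x 5 + x 6 + x 7 = 2 * t1" by (rule evenE)
  then have x7: "x 7 = 2 * t1 - x 4 - x 5 - x 6" by simp
  from N_latD(3)[OF x] obtain t2 where "x 8 + x 9 + x 10 + x 11 = 2 * t2" by (rule evenE)
  then have x11: "x 11 = 2 * t2 - x 8 - x 9 - x 10" by simp
  have "bN (vadd r (rho r)) x = 2 * (r 2 * x 1 + (r 1 + r 3) * x 0 + (2 * r 2 - r 0) * x 3 - r 1 * x 2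
     - ((r 4 + r 5) * (x 4 + x 5) - r 4 * x 5 + 2 * s1 * t1 - s1 * (x 4 + x 5) - (r 4 + r 5) * t1 - r 6 * x 7)
     - ((r 8 + r 9) * (x 8 + x 9) - r 8 * x 9 + 2 * s2 * t2 - s2 * (x 8 + x 9) - (r 8 + r 9) * t2 - r 10 * x 11))"
    unfolding bN_exp vadd_def rho_def by (simp add: r7 r11 x7 x11 algebra_simps)
  then show ?thesis by simp
qed

lemma claim3: assumes r: "r \<in> N_lat" shows "(\<lambda>i. (of_int (r i + rho r i) :: rat) / 2) \<in> N_dual"
  unfolding N_dual_def
proof (intro CollectI conjI ballI)
  show "supp_in 12 (\<lambda>i. (of_int (r i + rho r i) :: rat) / 2)"
    unfolding supp_in_def using N_latD(1)[OF r] by (simp add: rho_def)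
  fix x assume x: "x \<in> N_lat"
  obtain k where k: "bN (vadd r (rho r)) x = 2 * k" using dual_even[OF r x] by (rule evenE)
  have "bN (\<lambda>i. (of_int (r i + rho r i) :: rat) / 2) (\<lambda>i. of_int (x i)) = of_int (bN (vadd r (rho r)) x) / 2"
    by (simp add: bN_exp vadd_def field_simps)
  also have "\<dots> = of_int k" using k by simp
  finally show "bN (\<lambda>i. (of_int (r i + rho r i) :: rat) / 2) (\<lambda>i. of_int (x i)) \<in> \<int>" by simp
qed

theorem lemma4p2:
  fixes r :: "nat \<Rightarrow> int"
  assumes "r \<in> N_lat" and "bN r r = -2"
  shows "lattice_iso (R_lat r) bN A1A1_lat bA1A1
       \<and> lattice_iso (orth_compl (R_lat r)) bN M_lat bM
       \<and> (\<lambda>i. (of_int (r i + rho r i) :: rat) / 2) \<in> N_dual"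
proof -
  have r: "root r" using assms root_def by simp
  show ?thesis using claim1[OF r] claim2[OF r] claim3[OF assms(1)] by simp
qed


end
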